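(* Let $G=(V,E)$ be a prime permutation graph, let $(<_1,<_2)$ be a realizer of $G$, and let $w$ be the first element of $<_1$. Then the relations $\vartriangleleft_1^w$ and $\vartriangleleft_2^w$ are strict linear orders on $V$.
   Context: Graphs are finite, simple, undirected, with nonempty vertex set. A module of $G$ is a nonempty $M\subseteq V$ such that every vertex outside $M$ is adjacent to all or none of $M$; $G$ is prime if its only modules are $V$ and the singletons. A realizer of $G$ is a pair $(<_1,<_2)$ of strict linear orders on $V$ such that distinct $u,v$ are adjacent iff they appear in different orders in $<_1$ and $<_2$; $G$ is a permutation graph if it has a realizer. For a pair of binary relations $(\lhd_1,\lhd_2)$ on $V$: its transitive closure is $(\lhd_1^T,\lhd_2^T)$ (componentwise transitive closures); its closure under $E$ is $(\lhd_1^E,\lhd_2^E)$ where, for $i\in[2]$, $\lhd_i^E=\lhd_i\cup\{(v,u)\mid u\lhd_{3-i}v,\ \{u,v\}\in E\}\cup\{(u,v)\mid u\lhd_{3-i}v,\ \{u,v\}\notin E\}$. For $w\in V$ define $\lhd_{1,0}^w=\{(w,v)\mid v\in V, v\ne w\}$, $\lhd_{2,0}^w=\emptyset$, and for $k\ge0$, $(\lhd_{1,k+1}^w,\lhd_{2,k+1}^w)=((\lhd_{1,k}^w,\lhd_{2,k}^w)^E)^T$. These increase with $k$; $\lhd_i^w$ denotes $\lhd_{i,m}^w$ for $m$ such that the sequence has stabilized. *)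

theory Defs
  imports Main
begin

definition graph :: "'a set \<Rightarrow> 'a set set \<Rightarrow> bool" where
  "graph V E \<longleftrightarrow> finite V \<and> V \<noteq> {} \<and>
     (\<forall>e\<in>E. \<exists>u v. u \<in> V \<and> v \<in> V \<and> u \<noteq> v \<and> e = {u, v})"

definition is_module :: "'a set \<Rightarrow> 'a set set \<Rightarrow> 'a set \<Rightarrow> bool" where
  "is_module V E M \<longleftrightarrow> M \<subseteq> V \<and> M \<noteq> {} \<and>
     (\<forall>x \<in> V - M. (\<forall>m\<in>M. {x, m} \<in> E) \<or> (\<forall>m\<in>M. {x, m} \<notin> E))"

definition prime_graph :: "'a set \<Rightarrow> 'a set set \<Rightarrow> bool" where
  "prime_graph V E \<longleftrightarrow> (\<forall>M. is_module V E M \<longrightarrow> M = V \<or> (\<exists>v. M = {v}))"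

definition strict_linorder_on :: "'a set \<Rightarrow> 'a rel \<Rightarrow> bool" where
  "strict_linorder_on V r \<longleftrightarrow> r \<subseteq> V \<times> V \<and> irrefl_on V r \<and> trans r \<and> total_on V r"

definition realizer :: "'a set \<Rightarrow> 'a set set \<Rightarrow> 'a rel \<Rightarrow> 'a rel \<Rightarrow> bool" where
  "realizer V E r1 r2 \<longleftrightarrow> strict_linorder_on V r1 \<and> strict_linorder_on V r2 \<and>
     (\<forall>u\<in>V. \<forall>v\<in>V. u \<noteq> v \<longrightarrow>
        ({u, v} \<in> E \<longleftrightarrow> ((u, v) \<in> r1 \<and> (v, u) \<in> r2) \<or> ((v, u) \<in> r1 \<and> (u, v) \<in> r2)))"

definition permutation_graph :: "'a set \<Rightarrow> 'a set set \<Rightarrow> bool" where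
  "permutation_graph V E \<longleftrightarrow> graph V E \<and> (\<exists>r1 r2. realizer V E r1 r2)"

definition closE_comp :: "'a set set \<Rightarrow> 'a rel \<Rightarrow> 'a rel \<Rightarrow> 'a rel" where
  "closE_comp E li lo = li \<union> {(v, u). (u, v) \<in> lo \<and> {u, v} \<in> E}
                            \<union> {(u, v). (u, v) \<in> lo \<and> {u, v} \<notin> E}"

definition closE :: "'a set set \<Rightarrow> 'a rel \<times> 'a rel \<Rightarrow> 'a rel \<times> 'a rel" where
  "closE E p = (closE_comp E (fst p) (snd p), closE_comp E (snd p) (fst p))"

definition closT :: "'a rel \<times> 'a rel \<Rightarrow> 'a rel \<times> 'a rel" where
  "closT p = (trancl (fst p), trancl (snd p))"

primrec lhd_seq :: "'a set \<Rightarrow> 'a set set \<Rightarrow> 'a \<Rightarrow> nat \<Rightarrow> 'a rel \<times> 'a rel" where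
  "lhd_seq V E w 0 = ({(w, v) | v. v \<in> V \<and> v \<noteq> w}, {})"
| "lhd_seq V E w (Suc k) = closT (closE E (lhd_seq V E w k))"

definition lhd_lim :: "'a set \<Rightarrow> 'a set set \<Rightarrow> 'a \<Rightarrow> 'a rel \<times> 'a rel" where
  "lhd_lim V E w = lhd_seq V E w (LEAST m. \<forall>k\<ge>m. lhd_seq V E w k = lhd_seq V E w m)"

end

theory Submission
  imports Defs
begin

lemma nodist:
  assumes t1: "trans L1" and t2: "trans L2"
  and e12: "\<And>u v. (u,v)\<in>L1 \<Longrightarrow> {u,v}\<in>E \<Longrightarrow> (v,u)\<in>L2"
  and n12: "\<And>u v. (u,v)\<in>L1 \<Longrightarrow> {u,v}\<notin>E \<Longrightarrow> (u,v)\<in>L2"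
  and e21: "\<And>u v. (u,v)\<in>L2 \<Longrightarrow> {u,v}\<in>E \<Longrightarrow> (v,u)\<in>L1"
  and n21: "\<And>u v. (u,v)\<in>L2 \<Longrightarrow> {u,v}\<notin>E \<Longrightarrow> (u,v)\<in>L1"
  and cm: "(x,m)\<in>L1 \<or> (m,x)\<in>L1" and cm': "(x,m')\<in>L1 \<or> (m',x)\<in>L1"
  and i1: "(m,m')\<notin>L1" and i2: "(m',m)\<notin>L1"
  shows "{x,m}\<in>E \<longleftrightarrow> {x,m'}\<in>E"
proof -
  have c2: "\<And>u v. (u,v)\<in>L2 \<Longrightarrow> (u,v)\<in>L1 \<or> (v,u)\<in>L1" using e21 n21 by blast
  have sw: "\<And>a b. {a,b} = {b,a}" by (simp add: insert_commute)
  show ?thesis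
  proof (cases "(x,m)\<in>L1")
    case True
    have xm': "(x,m')\<in>L1" using cm' True i2 t1 by (meson transD)
    show ?thesis
    proof
      assume h: "{x,m}\<in>E"
      show "{x,m'}\<in>E"
      proof (rule ccontr)
        assume "{x,m'}\<notin>E"
        then have "(x,m')\<in>L2" using n12 xm' by blast
        moreover have "(m,x)\<in>L2" using e12 True h by blast
        ultimately have "(m,m')\<in>L2" using t2 by (meson transD)
        then show False using c2 i1 i2 by blast
      qed
    next
      assume h: "{x,m'}\<in>E"
      show "{x,m}\<in>E"
      proof (rule ccontr)
        assume "{x,m}\<notin>E"
        then have "(x,m)\<in>L2" using n12 True by blast
        moreover have "(m',x)\<in>L2" using e12 xm' h by blast
        ultimately have "(m',m)\<in>L2" using t2 by (meson transD)
        then show False using c2 i1 i2 by blast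
      qed
    qed
  next
    case False
    then have mx: "(m,x)\<in>L1" using cm by blast
    have mx': "(m',x)\<in>L1" using cm' mx i1 t1 by (meson transD)
    show ?thesis
    proof
      assume h: "{x,m}\<in>E"
      show "{x,m'}\<in>E"
      proof (rule ccontr)
        assume "{x,m'}\<notin>E"
        then have "(m',x)\<in>L2" using n12 mx' sw by metis
        moreover have "(x,m)\<in>L2" using e12 mx h sw by metis
        ultimately have "(m',m)\<in>L2" using t2 by (meson transD)
        then show False using c2 i1 i2 by blast
      qed
    next
      assume h: "{x,m'}\<in>E"
      show "{x,m}\<in>E"
      proof (rule ccontr)
        assume "{x,m}\<notin>E"
        then have "(m,x)\<in>L2" using n12 mx sw by metis
        moreover have "(x,m')\<in>L2" using e12 mx' h sw by metis
        ultimately have "(m,m')\<in>L2" using t2 by (meson transD)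
        then show False using c2 i1 i2 by blast
      qed
    qed
  qed
qed

lemma total_L1:
  assumes pr: "prime_graph V E" and wV: "w\<in>V" and wf: "\<forall>v\<in>V. v\<noteq>w \<longrightarrow> (w,v)\<in>L1"
  and t1: "trans L1" and t2: "trans L2"
  and e12: "\<And>u v. (u,v)\<in>L1 \<Longrightarrow> {u,v}\<in>E \<Longrightarrow> (v,u)\<in>L2"
  and n12: "\<And>u v. (u,v)\<in>L1 \<Longrightarrow> {u,v}\<notin>E \<Longrightarrow> (u,v)\<in>L2"
  and e21: "\<And>u v. (u,v)\<in>L2 \<Longrightarrow> {u,v}\<in>E \<Longrightarrow> (v,u)\<in>L1"
  and n21: "\<And>u v. (u,v)\<in>L2 \<Longrightarrow> {u,v}\<notin>E \<Longrightarrow> (u,v)\<in>L1"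
  shows "total_on V L1"
  unfolding total_on_def
proof (intro ballI impI, rule ccontr)
  fix a b assume aV: "a\<in>V" and bV: "b\<in>V" and ab: "a\<noteq>b" and nc: "\<not>((a,b)\<in>L1 \<or> (b,a)\<in>L1)"
  define R where "R = {(u,v). u\<in>V \<and> v\<in>V \<and> u\<noteq>v \<and> (u,v)\<notin>L1 \<and> (v,u)\<notin>L1}"
  define M where "M = {y. (a,y)\<in>R\<^sup>*}"
  have MV: "M \<subseteq> V"
  proof
    fix y assume "y\<in>M"
    then have "(a,y)\<in>R\<^sup>*" by (simp add: M_def)
    then show "y\<in>V" by (induction rule: rtrancl_induct) (auto simp: aV R_def)
  qed
  have aM: "a\<in>M" by (simp add: M_def)
  have bM: "b\<in>M" using aV bV ab nc by (auto simp: M_def R_def)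
  have wM: "w\<notin>M"
  proof
    assume "w\<in>M"
    then have "(a,w)\<in>R\<^sup>*" by (simp add: M_def)
    then show False
    proof (cases rule: rtranclE)
      case base
      then show False using wf bV ab nc by auto
    next
      case (step z)
      then show False using wf by (auto simp: R_def)
    qed
  qed
  have mod: "is_module V E M"
    unfolding is_module_def
  proof (intro conjI ballI)
    show "M\<subseteq>V" by (rule MV)
    show "M\<noteq>{}" using aM by blast
    fix x assume xM: "x\<in>V - M"
    have cx: "\<And>y. y\<in>M \<Longrightarrow> (x,y)\<in>L1 \<or> (y,x)\<in>L1"
    proof (rule ccontr)
      fix y assume yM: "y\<in>M" and n: "\<not>((x,y)\<in>L1 \<or> (y,x)\<in>L1)"
      have "y\<noteq>x" using yM xM by blast
      then have "(y,x)\<in>R" using n yM MV xM by (auto simp: R_def)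
      then have "x\<in>M" using yM by (auto simp: M_def intro: rtrancl_into_rtrancl)
      then show False using xM by blast
    qed
    have eq: "\<And>y. y\<in>M \<Longrightarrow> ({x,y}\<in>E \<longleftrightarrow> {x,a}\<in>E)"
    proof -
      fix y assume "y\<in>M"
      then have "(a,y)\<in>R\<^sup>*" by (simp add: M_def)
      then show "{x,y}\<in>E \<longleftrightarrow> {x,a}\<in>E"
      proof (induction rule: rtrancl_induct)
        case base
        then show ?case by simp
      next
        case (step y z)
        have yM: "y\<in>M" using step(1) by (simp add: M_def)
        have zM: "z\<in>M" using step(1,2) by (auto simp: M_def intro: rtrancl_into_rtrancl)
        have "{x,y}\<in>E \<longleftrightarrow> {x,z}\<in>E"
          apply (rule nodist[OF t1 t2 e12 n12 e21 n21])
          using cx[OF yM] cx[OF zM] step(2) by (auto simp: R_def)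
        then show ?case using step(3) by blast
      qed
    qed
    show "(\<forall>m\<in>M. {x, m} \<in> E) \<or> (\<forall>m\<in>M. {x, m} \<notin> E)"
      using eq by blast
  qed
  from pr mod have "M = V \<or> (\<exists>v. M = {v})" by (simp add: prime_graph_def)
  then show False using wM wV aM bM ab by blast
qed

lemma closE_comp_sub:
  assumes sa: "strict_linorder_on V ra" and sb: "strict_linorder_on V rb"
  and H: "\<forall>u\<in>V. \<forall>v\<in>V. u\<noteq>v \<longrightarrow> ({u,v}\<in>E \<longleftrightarrow> ((u,v)\<in>ra \<and> (v,u)\<in>rb) \<or> ((v,u)\<in>ra \<and> (u,v)\<in>rb))"
  and A: "A \<subseteq> ra" and B: "B \<subseteq> rb"
  shows "closE_comp E A B \<subseteq> ra"
proof
  fix p assume p: "p \<in> closE_comp E A B"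
  obtain x y where pxy: "p = (x,y)" by (cases p)
  show "p \<in> ra"
  proof (cases "(x,y)\<in>A")
    case True then show ?thesis using A pxy by blast
  next
    case False
    have raV: "ra \<subseteq> V\<times>V" and rbV: "rb \<subseteq> V\<times>V" and tb: "trans rb" and ib: "irrefl_on V rb"
      and ta: "total_on V ra"
      using sa sb by (auto simp: strict_linorder_on_def)
    have asb: "\<And>u v. (u,v)\<in>rb \<Longrightarrow> (v,u)\<notin>rb"
      using tb ib rbV by (metis irrefl_on_def mem_Sigma_iff subsetD transD)
    from p False pxy consider "(y,x)\<in>B" "{y,x}\<in>E" | "(x,y)\<in>B" "{x,y}\<notin>E"
      by (auto simp: closE_comp_def)
    then show ?thesis
    proof cases
      case 1
      then have yx: "(y,x)\<in>rb" using B by blast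
      then have "y\<in>V" "x\<in>V" "y\<noteq>x" using rbV ib by (auto simp: irrefl_on_def)
      then show ?thesis using H 1 yx asb pxy by blast
    next
      case 2
      then have xy: "(x,y)\<in>rb" using B by blast
      then have V: "y\<in>V" "x\<in>V" "y\<noteq>x" using rbV ib by (auto simp: irrefl_on_def)
      then have "(y,x)\<notin>ra" using H[rule_format, of x y] 2 xy by auto
      then show ?thesis using ta V pxy by (auto simp: total_on_def)
    qed
  qed
qed

lemma seq_sub:
  assumes re: "realizer V E r1 r2" and wf: "\<forall>v\<in>V. v \<noteq> w \<longrightarrow> (w, v) \<in> r1"
  shows "fst (lhd_seq V E w k) \<subseteq> r1 \<and> snd (lhd_seq V E w k) \<subseteq> r2"
proof (induction k)
  case 0
  then show ?case using wf by auto
next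
  case (Suc k)
  have s1: "strict_linorder_on V r1" and s2: "strict_linorder_on V r2"
    and H: "\<forall>u\<in>V. \<forall>v\<in>V. u \<noteq> v \<longrightarrow>
        ({u, v} \<in> E \<longleftrightarrow> ((u, v) \<in> r1 \<and> (v, u) \<in> r2) \<or> ((v, u) \<in> r1 \<and> (u, v) \<in> r2))"
    using re by (auto simp: realizer_def)
  have H2: "\<forall>u\<in>V. \<forall>v\<in>V. u \<noteq> v \<longrightarrow>
        ({u, v} \<in> E \<longleftrightarrow> ((u, v) \<in> r2 \<and> (v, u) \<in> r1) \<or> ((v, u) \<in> r2 \<and> (u, v) \<in> r1))"
    using H by blast
  have tr1: "trans r1" and tr2: "trans r2" using s1 s2 by (auto simp: strict_linorder_on_def)
  have a: "closE_comp E (fst (lhd_seq V E w k)) (snd (lhd_seq V E w k)) \<subseteq> r1"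
    using closE_comp_sub[OF s1 s2 H] Suc by blast
  have b: "closE_comp E (snd (lhd_seq V E w k)) (fst (lhd_seq V E w k)) \<subseteq> r2"
    using closE_comp_sub[OF s2 s1 H2] Suc by blast
  show ?case using a b tr1 tr2
    by (simp add: closT_def closE_def) (metis trancl_id trancl_mono subsetI)
qed

lemma seq_step:
  fixes V :: "'a set" and E :: "'a set set" and w :: 'a
  shows "fst (lhd_seq V E w k) \<subseteq> fst (lhd_seq V E w (Suc k)) \<and> snd (lhd_seq V E w k) \<subseteq> snd (lhd_seq V E w (Suc k))"
proof -
  have g: "\<And>A B :: 'a rel. A \<subseteq> trancl (closE_comp E A B)"
  proof
    fix A B :: "'a rel" and p assume "p \<in> A"
    then have "p \<in> closE_comp E A B" by (simp add: closE_comp_def)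
    then show "p \<in> trancl (closE_comp E A B)" by (rule r_into_trancl')
  qed
  show ?thesis by (simp add: closT_def closE_def g)
qed

lemma seq_mono1:
  fixes V :: "'a set" and E :: "'a set set" and w :: 'a
  assumes ij: "i \<le> j" shows "fst (lhd_seq V E w i) \<subseteq> fst (lhd_seq V E w j)"
proof -
  have st: "fst (lhd_seq V E w n) \<subseteq> fst (lhd_seq V E w (Suc n))" for n using seq_step[of V E w n] by (rule conjunct1)
  show ?thesis using lift_Suc_mono_le[of "\<lambda>k. fst (lhd_seq V E w k)", OF st ij] by simp
qed

theorem theorem5p6:
  fixes V :: "'a set" and E :: "'a set set" and r1 r2 :: "'a rel" and w :: 'a
  assumes "permutation_graph V E"
    and "prime_graph V E"
    and "realizer V E r1 r2"
    and "w \<in> V" and "\<forall>v\<in>V. v \<noteq> w \<longrightarrow> (w, v) \<in> r1"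
  shows "strict_linorder_on V (fst (lhd_lim V E w)) \<and> strict_linorder_on V (snd (lhd_lim V E w))"
proof -
  let ?S = "lhd_seq V E w"
  have finV: "finite V" using assms(1) by (simp add: permutation_graph_def graph_def)
  have s1: "strict_linorder_on V r1" and s2: "strict_linorder_on V r2"
    using assms(3) by (auto simp: realizer_def)
  have fin1: "finite r1" and fin2: "finite r2" using s1 s2 finV
    by (auto simp: strict_linorder_on_def intro: finite_subset)
  have sub: "\<And>k. fst (?S k) \<subseteq> r1 \<and> snd (?S k) \<subseteq> r2" using seq_sub[OF assms(3) assms(5)] by blast
  have ex: "\<exists>m. ?S (Suc m) = ?S m"
  proof (rule ccontr)
    assume nx: "\<not> ?thesis"
    define h where "h k = card (fst (?S k)) + card (snd (?S k))" for k
    have "\<And>k. h k \<ge> k"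
    proof -
      fix k show "h k \<ge> k"
      proof (induction k)
        case 0 then show ?case by simp
      next
        case (Suc k)
        have f1: "finite (fst (?S (Suc k)))" "finite (snd (?S (Suc k)))"
          using sub[of "Suc k"] fin1 fin2 by (auto intro: finite_subset)
        have st: "fst (?S k) \<subseteq> fst (?S (Suc k))" "snd (?S k) \<subseteq> snd (?S (Suc k))"
          using seq_step[of V E w k] by auto
        have ne: "fst (?S k) \<noteq> fst (?S (Suc k)) \<or> snd (?S k) \<noteq> snd (?S (Suc k))"
          using nx by (metis prod.collapse)
        have c1: "card (fst (?S k)) \<le> card (fst (?S (Suc k)))"
          "card (snd (?S k)) \<le> card (snd (?S (Suc k)))"
          using f1 st by (auto intro: card_mono)
        have "card (fst (?S k)) < card (fst (?S (Suc k))) \<or> card (snd (?S k)) < card (snd (?S (Suc k)))"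
          using ne f1 st by (meson psubsetI psubset_card_mono)
        then have "h k < h (Suc k)" using c1 by (auto simp: h_def)
        then show ?case using Suc by simp
      qed
    qed
    moreover have "\<And>k. h k \<le> card r1 + card r2"
      using sub fin1 fin2 by (simp add: h_def add_mono card_mono)
    ultimately have "Suc (card r1 + card r2) \<le> card r1 + card r2"
      using le_trans by blast
    then show False by simp
  qed
  then obtain m where m: "?S (Suc m) = ?S m" by blast
  have "\<forall>k\<ge>m. ?S k = ?S m"
  proof (intro allI impI)
    fix k assume "m \<le> k"
    then show "?S k = ?S m"
    proof (induction k rule: dec_induct)
      case base then show ?case by simp
    next
      case (step k)
      have "?S (Suc k) = closT (closE E (?S k))" by simp
      also have "... = closT (closE E (?S m))" using step by simp
      also have "... = ?S m" using m by simp
      finally show ?case .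
    qed
  qed
  then have P: "\<exists>m. \<forall>k\<ge>m. ?S k = ?S m" by blast
  define m0 where "m0 = (LEAST m. \<forall>k\<ge>m. ?S k = ?S m)"
  have Pm0: "\<forall>k\<ge>m0. ?S k = ?S m0" unfolding m0_def by (rule LeastI_ex[OF P])
  have lim: "lhd_lim V E w = ?S m0" by (simp add: lhd_lim_def m0_def)
  define L1 where "L1 = fst (?S m0)"
  define L2 where "L2 = snd (?S m0)"
  have fix0: "?S (Suc m0) = ?S m0" using Pm0[rule_format, of "Suc m0"] by simp
  then have fx: "closT (closE E (?S m0)) = ?S m0" by simp
  have eq1: "trancl (closE_comp E L1 L2) = L1"
  proof -
    have "fst (closT (closE E (?S m0))) = fst (?S m0)" using fx by simp
    then show ?thesis by (simp add: closT_def closE_def L1_def L2_def)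
  qed
  have eq2: "trancl (closE_comp E L2 L1) = L2"
  proof -
    have "snd (closT (closE E (?S m0))) = snd (?S m0)" using fx by simp
    then show ?thesis by (simp add: closT_def closE_def L1_def L2_def)
  qed
  have t1: "trans L1"
  proof -
    have "trans (trancl (closE_comp E L1 L2))" by (rule trans_trancl)
    then show ?thesis by (simp only: eq1)
  qed
  have t2: "trans L2"
  proof -
    have "trans (trancl (closE_comp E L2 L1))" by (rule trans_trancl)
    then show ?thesis by (simp only: eq2)
  qed
  have c1: "closE_comp E L1 L2 \<subseteq> L1"
  proof -
    have "closE_comp E L1 L2 \<subseteq> trancl (closE_comp E L1 L2)" by (rule subsetI, rule r_into_trancl')
    then show ?thesis by (simp only: eq1)
  qed
  have c2: "closE_comp E L2 L1 \<subseteq> L2"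
  proof -
    have "closE_comp E L2 L1 \<subseteq> trancl (closE_comp E L2 L1)" by (rule subsetI, rule r_into_trancl')
    then show ?thesis by (simp only: eq2)
  qed
  have e12: "\<And>u v. (u,v)\<in>L1 \<Longrightarrow> {u,v}\<in>E \<Longrightarrow> (v,u)\<in>L2"
    using c2 by (auto simp: closE_comp_def)
  have n12: "\<And>u v. (u,v)\<in>L1 \<Longrightarrow> {u,v}\<notin>E \<Longrightarrow> (u,v)\<in>L2"
    using c2 by (auto simp: closE_comp_def)
  have e21: "\<And>u v. (u,v)\<in>L2 \<Longrightarrow> {u,v}\<in>E \<Longrightarrow> (v,u)\<in>L1"
    using c1 by (auto simp: closE_comp_def)
  have n21: "\<And>u v. (u,v)\<in>L2 \<Longrightarrow> {u,v}\<notin>E \<Longrightarrow> (u,v)\<in>L1"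
    using c1 by (auto simp: closE_comp_def)
  have wf: "\<forall>v\<in>V. v\<noteq>w \<longrightarrow> (w,v)\<in>L1"
    using seq_mono1[of 0 m0 V E w] by (auto simp: L1_def)
  have tot1: "total_on V L1"
    by (rule total_L1[OF assms(2) assms(4) wf t1 t2 e12 n12 e21 n21])
  have tot2: "total_on V L2"
    unfolding total_on_def
  proof (intro ballI impI)
    fix x y assume "x\<in>V" "y\<in>V" "x\<noteq>y"
    then have "(x,y)\<in>L1 \<or> (y,x)\<in>L1" using tot1 by (simp add: total_on_def)
    then show "(x,y)\<in>L2 \<or> (y,x)\<in>L2"
      using e12[of x y] n12[of x y] e12[of y x] n12[of y x] by blast
  qed
  have L1r: "L1 \<subseteq> r1" and L2r: "L2 \<subseteq> r2" using sub by (auto simp: L1_def L2_def)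
  have "strict_linorder_on V L1" using s1 L1r t1 tot1
    by (auto simp: strict_linorder_on_def irrefl_on_def)
  moreover have "strict_linorder_on V L2" using s2 L2r t2 tot2
    by (auto simp: strict_linorder_on_def irrefl_on_def)
  ultimately show ?thesis using lim by (simp add: L1_def L2_def)
qed

end
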